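(* Let $k\ge 3$ and let $w$ be a word over $\{a,b\}$. Let $p$ and $q$ be two consecutive occurrences of $u=ba^{k-1}$ in $w$ ($p$ before $q$), with sets of forbidden local positions $F_p$ and $F_q$. If $F_q=\{0,i,i+1,\dots,k-1\}$ for some $1\le i\le k-1$ and $|F_p|=|F_q|$, then $F_p=F_q$.
   Context: $\Sigma=\{a,b\}$. $S_k=\left(\Sigma^k\setminus\{ba^{k-1},b^{k-1}a\}\right)\cup\left(\Sigma^{k-1}\setminus\{a^{k-1},b^{k-1}\}\right)$, $u=ba^{k-1}$, $v=b^{k-1}a$. $\mathit{Pref}(S^* )$ denotes the set of prefixes of words in $S^*$. For $w=w_1\cdots w_n$, $w[i..j]=w_i\cdots w_j$ (empty if $i>j$). A position $j$, $0\le j\le n-1$, is forbidden in $w$ if $w[j+1..n]\notin\mathit{Pref}(S_k^* )$. An occurrence of $p\in\{u,v\}$ in $w$ is an index $s$ with $w[s+1..s+k]=p$; local position $i\in\{0,\dots,k-1\}$ is the position $s+i$ of $w$, and it is forbidden in the occurrence if $s+i$ is forbidden in $w$. Two occurrences of words from $\{u,v\}$ starting at $s<t$ overlap if $t<s+k$; they are consecutive if either they overlap or they are the only occurrences of $u$ or $v$ lying inside the factor $w[s+1..t+k]$. *)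

theory Defs
  imports Main
begin

text \<open>Alphabet {a,b}; words are lists, position j of the paper's 1-indexed word w_1...w_n
  is list index j-1.\<close>
datatype letter = A | B

definition u_word :: "nat \<Rightarrow> letter list" where
  "u_word k = B # replicate (k - 1) A"

definition v_word :: "nat \<Rightarrow> letter list" where
  "v_word k = replicate (k - 1) B @ [A]"

definition S_set :: "nat \<Rightarrow> letter list set" where
  "S_set k = ({x. length x = k} - {u_word k, v_word k})
           \<union> ({x. length x = k - 1} - {replicate (k - 1) A, replicate (k - 1) B})"

definition star_lang :: "letter list set \<Rightarrow> letter list set" where
  "star_lang S = {concat ws | ws. ws \<in> lists S}"

definition Pref :: "letter list set \<Rightarrow> letter list set" where
  "Pref L = {x. \<exists>y. x @ y \<in> L}"

text \<open>w[j+1..n] = drop j w\<close>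
definition forbidden :: "nat \<Rightarrow> letter list \<Rightarrow> nat \<Rightarrow> bool" where
  "forbidden k w j \<longleftrightarrow> j < length w \<and> drop j w \<notin> Pref (star_lang (S_set k))"

text \<open>occurrence of p at index s: w[s+1..s+|p|] = p\<close>
definition occurs_at :: "letter list \<Rightarrow> letter list \<Rightarrow> nat \<Rightarrow> bool" where
  "occurs_at w p s \<longleftrightarrow> s + length p \<le> length w \<and> take (length p) (drop s w) = p"

definition occ_uv :: "nat \<Rightarrow> letter list \<Rightarrow> nat \<Rightarrow> bool" where
  "occ_uv k w s \<longleftrightarrow> occurs_at w (u_word k) s \<or> occurs_at w (v_word k) s"

definition forb_local :: "nat \<Rightarrow> letter list \<Rightarrow> nat \<Rightarrow> nat set" where
  "forb_local k w s = {i. i < k \<and> forbidden k w (s + i)}"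

definition consecutive :: "nat \<Rightarrow> letter list \<Rightarrow> nat \<Rightarrow> nat \<Rightarrow> bool" where
  "consecutive k w s t \<longleftrightarrow> occ_uv k w s \<and> occ_uv k w t \<and> s < t \<and>
     (t < s + k \<or> (\<forall>r. occ_uv k w r \<and> s \<le> r \<and> r + k \<le> t + k \<longrightarrow> r = s \<or> r = t))"

end

theory Submission
  imports Defs
begin

lemma Pref_Nil: "[] \<in> Pref (star_lang S)"
  unfolding Pref_def star_lang_def
  by (rule CollectI, rule exI[of _ "[]"], auto intro: exI[of _ "[]"])

lemma Pref_cons: "x \<in> S \<Longrightarrow> y \<in> Pref (star_lang S) \<Longrightarrow> x @ y \<in> Pref (star_lang S)"
proof -
  assume x: "x \<in> S" and y: "y \<in> Pref (star_lang S)"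
  then obtain z ws where "y @ z = concat ws" "ws \<in> lists S"
    unfolding Pref_def star_lang_def by blast
  then have "(x @ y) @ z = concat (x # ws)" "x # ws \<in> lists S" using x by auto
  then show ?thesis unfolding Pref_def star_lang_def by blast
qed

lemma notforb: "\<not> forbidden k w q \<Longrightarrow> drop q w \<in> Pref (star_lang (S_set k))"
  unfolding forbidden_def using Pref_Nil by (cases "q < length w") auto

lemma R1:
  assumes "p + k \<le> length w" "take k (drop p w) \<noteq> u_word k" "take k (drop p w) \<noteq> v_word k"
    and "forbidden k w p"
  shows "forbidden k w (p + k)"
proof (rule ccontr)
  assume "\<not> forbidden k w (p + k)"
  hence d: "drop (p + k) w \<in> Pref (star_lang (S_set k))" by (rule notforb)
  have "take k (drop p w) \<in> S_set k" using assms(1-3) unfolding S_set_def by auto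
  from Pref_cons[OF this d] have "take k (drop p w) @ drop (p + k) w \<in> Pref (star_lang (S_set k))" .
  moreover have "take k (drop p w) @ drop (p + k) w = drop p w"
    by (metis append_take_drop_id drop_drop add.commute)
  ultimately show False using assms(4) unfolding forbidden_def by auto
qed

lemma R2:
  assumes "p + (k - 1) \<le> length w" "take (k - 1) (drop p w) \<noteq> replicate (k - 1) A"
    "take (k - 1) (drop p w) \<noteq> replicate (k - 1) B"
    and "forbidden k w p"
  shows "forbidden k w (p + (k - 1))"
proof (rule ccontr)
  assume "\<not> forbidden k w (p + (k - 1))"
  hence d: "drop (p + (k - 1)) w \<in> Pref (star_lang (S_set k))" by (rule notforb)
  have "take (k - 1) (drop p w) \<in> S_set k" using assms(1-3) unfolding S_set_def by auto
  from Pref_cons[OF this d] have "take (k - 1) (drop p w) @ drop (p + (k - 1)) w \<in> Pref (star_lang (S_set k))" .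
  moreover have "take (k - 1) (drop p w) @ drop (p + (k - 1)) w = drop p w"
    by (metis append_take_drop_id drop_drop add.commute)
  ultimately show False using assms(4) unfolding forbidden_def by auto
qed

lemma chain:
  assumes step: "\<forall>q. s < q \<and> q < t \<longrightarrow> (forbidden k w q \<longrightarrow> forbidden k w (q + k))"
  shows "s < p \<Longrightarrow> p + j * k < t + k \<Longrightarrow> forbidden k w p \<Longrightarrow> forbidden k w (p + j * k)"
proof (induction j)
  case 0
  then show ?case by simp
next
  case (Suc j)
  then have "forbidden k w (p + j * k)" by simp
  moreover have "s < p + j * k" "p + j * k < t" using Suc.prems by auto
  ultimately have "forbidden k w (p + j * k + k)" using step by blast
  then show ?case by (simp add: ac_simps)
qed

lemma modsub:
  fixes E x k :: nat
  assumes "x \<le> E" "x < k"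
  shows "(E - x) mod k = (if x \<le> E mod k then E mod k - x else E mod k + k - x)"
proof -
  have d: "k dvd (E - E mod k)" by (simp add: minus_mod_eq_mult_div)
  have le: "E mod k \<le> E" by simp
  show ?thesis
  proof (cases "x \<le> E mod k")
    case True
    have "E - x - (E mod k - x) = E - E mod k" using True assms le by linarith
    then have "(E - x) mod k = E mod k - x"
      using True assms d le by (intro mod_nat_eqI) (auto intro: le_less_trans[of _ "E mod k"] diff_le_mono)
    then show ?thesis using True by simp
  next
    case False
    have "E \<ge> E mod k + k" 
    proof (rule ccontr)
      assume "\<not> ?thesis"
      then have "E - E mod k < k" using le by arith
      then have "E - E mod k = 0" using d by (metis dvd_imp_le not_less neq0_conv)
      then have "E \<le> E mod k" by simp
      then show False using False assms by linarith
    qed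
    then have e1: "E - x - (E mod k + k - x) = (E - E mod k) - k" using False assms by linarith
    have "k dvd E - (E mod k + k)" using d dvd_diff_nat[OF d dvd_refl[of k]] by (simp add: diff_diff_add)
    then have "(E - x) mod k = E mod k + k - x"
      using False assms e1 \<open>E \<ge> E mod k + k\<close> by (intro mod_nat_eqI) auto
    then show ?thesis using False by simp
  qed
qed


lemma comb:
  fixes k i e :: nat and Fs :: "nat set" and off :: "nat \<Rightarrow> nat"
  assumes k: "k \<ge> 3" and i: "2 \<le> i" "i \<le> k - 1" and e: "e < k" and sub: "Fs \<subseteq> {..<k}"
    and offdef: "\<And>x. off x = (if x \<le> e then k - 1 - e + x else x - e - 1)"
    and h: "\<And>x. x \<in> Fs \<Longrightarrow> 1 \<le> x \<Longrightarrow> off x \<in> {0} \<union> {i..k - 1} \<and> off x \<noteq> i"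
    and h0: "0 \<in> Fs \<Longrightarrow> k - 1 \<in> Fs"
    and c: "card Fs = card ({0} \<union> {i..k - 1})"
  shows "Fs = {0} \<union> {i..k - 1}"
proof -
  define Ft where "Ft = {0} \<union> {i..k - 1}"
  define G where "G = Ft - {i}"
  have fFt: "finite Ft" unfolding Ft_def by simp
  have iFt: "i \<in> Ft" "0 \<in> Ft" "i \<noteq> 0" using i unfolding Ft_def by auto
  have cG: "card G = card Ft - 1" unfolding G_def using fFt iFt by simp
  have cFt: "card Ft \<ge> 2"
  proof -
    have "{0, i} \<subseteq> Ft" using iFt by auto
    then have "card {0, i} \<le> card Ft" using fFt by (rule card_mono[rotated])
    then show ?thesis using iFt by simp
  qed
  have fFs: "finite Fs" using sub finite_subset by blast
  have inj: "inj_on off {..<k}"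
    unfolding inj_on_def offdef using e by auto
  have img: "off ` (Fs - {0}) \<subseteq> G - {off 0}"
  proof
    fix y assume "y \<in> off ` (Fs - {0})"
    then obtain x where x: "x \<in> Fs" "x \<noteq> 0" "y = off x" by auto
    have "off x \<in> G" using h[of x] x unfolding G_def Ft_def by auto
    moreover have "off x \<noteq> off 0" using inj x sub k unfolding inj_on_def by (metis lessThan_iff subsetD zero_less_iff_neq_zero le0 less_le_trans order.strict_trans1 less_trans)
    ultimately show "y \<in> G - {off 0}" using x by auto
  qed
  have injF: "inj_on off (Fs - {0})" using inj sub by (meson Diff_subset inj_on_subset subset_trans)
  have cle: "card (Fs - {0}) \<le> card (G - {off 0})"
    using card_mono[OF _ img] card_image[OF injF] fFt unfolding G_def by simp
  have cF: "card Fs \<le> card (Fs - {0}) + 1"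
    using fFs by (metis card_Diff1_le card_Diff_singleton_if le_add_diff_inverse2 le_refl
        nat_le_linear add_leE card_Diff1_less_iff card_Diff_subset empty_subsetI)
  have n0: "off 0 \<notin> G"
  proof
    assume "off 0 \<in> G"
    then have "card (G - {off 0}) = card G - 1" using fFt unfolding G_def by simp
    then show False using cle cF cG cFt c unfolding Ft_def[symmetric] by linarith
  qed
  have in0: "0 \<in> Fs"
  proof (rule ccontr)
    assume "0 \<notin> Fs"
    then have "Fs - {0} = Fs" by simp
    then show False using cle n0 cG cFt c unfolding Ft_def[symmetric] by simp
  qed
  have km: "k - 1 \<in> Fs" using h0 in0 .
  have g1: "off (k - 1) \<in> G" using h[OF km] k unfolding G_def Ft_def by auto
  have ek: "e = k - 2"
    using n0 g1 e k i unfolding G_def Ft_def offdef by (auto split: if_splits)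
  have "Fs \<subseteq> Ft"
  proof
    fix x assume x: "x \<in> Fs"
    show "x \<in> Ft"
    proof (cases "x = 0")
      case True then show ?thesis using iFt by simp
    next
      case False
      then have "off x \<in> G" using h[of x] x unfolding G_def Ft_def by auto
      moreover have "x < k" using x sub by auto
      ultimately show ?thesis using ek k i unfolding G_def Ft_def offdef by (auto split: if_splits)
    qed
  qed
  then show ?thesis using card_subset_eq[OF fFt] c unfolding Ft_def by metis
qed


lemma occ_u:
  assumes "occurs_at w (u_word k) p" "k \<ge> 1"
  shows "p + k \<le> length w" "w ! p = B" "\<And>j. 1 \<le> j \<Longrightarrow> j < k \<Longrightarrow> w ! (p + j) = A"
proof -
  have l: "length (u_word k) = k" using assms(2) unfolding u_word_def by simp
  have tk: "take k (drop p w) = u_word k" and pk: "p + k \<le> length w"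
    using assms(1) l unfolding occurs_at_def by auto
  show "p + k \<le> length w" by (rule pk)
  have nth: "\<And>j. j < k \<Longrightarrow> w ! (p + j) = u_word k ! j"
    using tk pk by (metis add_leD1 le_add_diff_inverse nat_add_left_cancel_less nth_drop nth_take)
  show "w ! p = B" using nth[of 0] assms(2) unfolding u_word_def by simp
  fix j assume "1 \<le> j" "j < k"
  then show "w ! (p + j) = A" using nth[of j] unfolding u_word_def
    by (cases j) auto
qed

lemma neq_rep: "j < length xs \<Longrightarrow> xs ! j \<noteq> c \<Longrightarrow> xs \<noteq> replicate n c"
  by auto

lemma nth_td: "j < n \<Longrightarrow> p + n \<le> length w \<Longrightarrow> take n (drop p w) ! j = w ! (p + j)"
  by simp

theorem lemma5:
  fixes k :: nat and w :: "letter list" and s t i :: nat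
  assumes "k \<ge> 3"
    and "occurs_at w (u_word k) s" and "occurs_at w (u_word k) t"
    and "consecutive k w s t"
    and "1 \<le> i" and "i \<le> k - 1"
    and "forb_local k w t = {0} \<union> {i..k - 1}"
    and "card (forb_local k w s) = card (forb_local k w t)"
  shows "forb_local k w s = forb_local k w t"
proof -
  note k = assms(1)
  have k1: "k \<ge> 1" using k by simp
  note us = occ_u[OF assms(2) k1] and ut = occ_u[OF assms(3) k1]
  have st: "s < t" using assms(4) unfolding consecutive_def by simp
  have tsk: "t \<ge> s + k"
  proof (rule ccontr)
    assume "\<not> ?thesis"
    then have "w ! (s + (t - s)) = A" using st by (intro us(3)) auto
    then show False using ut(2) st by simp
  qed
  have cons: "\<And>r. occ_uv k w r \<Longrightarrow> s \<le> r \<Longrightarrow> r \<le> t \<Longrightarrow> r = s \<or> r = t"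
    using assms(4) tsk unfolding consecutive_def by auto
  have lu: "length (u_word k) = k" "length (v_word k) = k" using k1 unfolding u_word_def v_word_def by auto
  have step: "\<forall>q. s < q \<and> q < t \<longrightarrow> (forbidden k w q \<longrightarrow> forbidden k w (q + k))"
  proof (intro allI impI)
    fix q assume q: "s < q \<and> q < t" and fq: "forbidden k w q"
    have ql: "q + k \<le> length w" using q ut(1) by simp
    have "take k (drop q w) \<noteq> u_word k"
    proof
      assume "take k (drop q w) = u_word k"
      then have "occ_uv k w q" unfolding occ_uv_def occurs_at_def using lu ql by simp
      then show False using cons[of q] q by auto
    qed
    moreover have "take k (drop q w) \<noteq> v_word k"
    proof
      assume "take k (drop q w) = v_word k"
      then have "occ_uv k w q" unfolding occ_uv_def occurs_at_def using lu ql by simp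
      then show False using cons[of q] q by auto
    qed
    ultimately show "forbidden k w (q + k)" using R1[OF ql _ _ fq] by blast
  qed
  have fin2: "forb_local k w s \<subseteq> {..<k}"
    unfolding forb_local_def by blast
  have fin: "finite (forb_local k w s)" "forb_local k w s \<subseteq> {..<k}"
    using fin2 finite_subset by blast+
  show ?thesis
  proof (cases "i = 1")
    case True
    have "{0} \<union> {1..k - 1} = {..<k}" using k by (auto simp: atLeastAtMost_iff)
    then have ft: "forb_local k w t = {..<k}" using assms(7) True by simp
    show ?thesis using card_subset_eq[OF finite_lessThan fin(2)] assms(8) ft by simp
  next
    case False
    then have i2: "i \<ge> 2" using assms(5) by simp
    define p0 where "p0 = t + i - k"
    have p0: "s < p0" "p0 < t" "p0 + (k - i) = t" using i2 assms(6) tsk unfolding p0_def by auto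
    have notX0: "\<not> forbidden k w p0"
    proof
      assume fp: "forbidden k w p0"
      have pl: "p0 + (k - 1) \<le> length w" using p0 ut(1) by simp
      have n1: "take (k - 1) (drop p0 w) \<noteq> replicate (k - 1) A"
        apply (rule neq_rep[of "k - i"])
        using pl i2 assms(6) p0 ut(2) by (auto simp: nth_td)
      have n2: "take (k - 1) (drop p0 w) \<noteq> replicate (k - 1) B"
      proof (cases "i = 2")
        case False
        show ?thesis
          apply (rule neq_rep[of "k - i + 1"])
          using pl i2 False assms(6) p0 ut(3)[of 1] by (auto simp: nth_td add.assoc)
      next
        case True
        show ?thesis
        proof
          assume eqB: "take (k - 1) (drop p0 w) = replicate (k - 1) B"
          have pk: "p0 + k \<le> length w" using p0 ut(1) by simp
          have "take k (drop p0 w) = take (k - 1) (drop p0 w) @ [drop p0 w ! (k - 1)]"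
            proof -
            have "k - 1 < length (drop p0 w)" using pk k by simp
            then have "take (Suc (k - 1)) (drop p0 w) = take (k - 1) (drop p0 w) @ [drop p0 w ! (k - 1)]"
              by (rule take_Suc_conv_app_nth)
            moreover have "Suc (k - 1) = k" using k by simp
            ultimately show ?thesis by simp
          qed
          also have "drop p0 w ! (k - 1) = w ! (t + 1)"
          proof -
            have "p0 + (k - 1) = t + 1" using p0 True k by simp
            then show ?thesis using pk k by (simp add: nth_drop)
          qed
          also have "w ! (t + 1) = A" using ut(3)[of 1] k by simp
          finally have "take k (drop p0 w) = v_word k" using eqB unfolding v_word_def by simp
          then have "occ_uv k w p0" unfolding occ_uv_def occurs_at_def using lu pk by simp
          then show False using cons[of p0] p0 by auto
        qed
      qed
      have "forbidden k w (p0 + (k - 1))" by (rule R2[OF pl n1 n2 fp])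
      moreover have "p0 + (k - 1) = t + (i - 1)" using p0 i2 by simp
      ultimately have "i - 1 \<in> forb_local k w t" unfolding forb_local_def using assms(6) i2 by auto
      then show False using assms(7) i2 by auto
    qed
    define E where "E = t + k - 1 - s"
    define e where "e = E mod k"
    define off where "off = (\<lambda>x. if x \<le> e then k - 1 - e + x else x - e - 1)"
    have e: "e < k" unfolding e_def using k by simp
    have h: "off x \<in> {0} \<union> {i..k - 1} \<and> off x \<noteq> i" if x: "x \<in> forb_local k w s" "1 \<le> x" for x
    proof -
      have xk: "x < k" and fx: "forbidden k w (s + x)" using x unfolding forb_local_def by auto
      have xE: "x \<le> E" using xk tsk unfolding E_def by simp
      define j where "j = (E - x) div k"
      define r where "r = (E - x) mod k"
      have rk: "r < k" unfolding r_def using k by simp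
      have jr: "j * k + r = E - x" unfolding j_def r_def by simp
      have lam: "s + x + j * k = t + (k - 1 - r)" using jr rk xE tsk unfolding E_def by arith
      have offx: "off x = k - 1 - r" unfolding off_def r_def using modsub[OF xE xk] e xk unfolding e_def[symmetric]
        by auto
      have "forbidden k w (s + x + j * k)"
        using chain[OF step, of "s + x" j] fx x(2) lam rk by simp
      then have "forbidden k w (t + off x)" using lam offx by simp
      then have "off x \<in> forb_local k w t" unfolding forb_local_def using offx k by auto
      then have A1: "off x \<in> {0} \<union> {i..k - 1}" using assms(7) by simp
      have "off x \<noteq> i"
      proof
        assume oi: "off x = i"
        have "j \<noteq> 0"
        proof
          assume "j = 0"
          then have "s + x = t + (k - 1 - r)" using lam by simp
          then show False using tsk xk by linarith
        qed
        then obtain j' where j': "j = Suc j'" by (cases j) auto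
        have "s + x + j' * k = p0" using lam offx oi j' unfolding p0_def by simp
        moreover have "forbidden k w (s + x + j' * k)"
          using chain[OF step, of "s + x" j'] fx x(2) lam rk j' by simp
        ultimately show False using notX0 by simp
      qed
      then show ?thesis using A1 by simp
    qed
    have h0: "k - 1 \<in> forb_local k w s" if "0 \<in> forb_local k w s"
    proof -
      have f0: "forbidden k w s" using that unfolding forb_local_def by simp
      have pl: "s + (k - 1) \<le> length w" using us(1) by simp
      have n1: "take (k - 1) (drop s w) \<noteq> replicate (k - 1) A"
        apply (rule neq_rep[of 0]) using pl k us(2) by (auto simp: nth_td)
      have n2: "take (k - 1) (drop s w) \<noteq> replicate (k - 1) B"
        apply (rule neq_rep[of 1]) using pl k us(3)[of 1] by (auto simp: nth_td)
      have "forbidden k w (s + (k - 1))" by (rule R2[OF pl n1 n2 f0])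
      then show ?thesis unfolding forb_local_def using k by simp
    qed
    show ?thesis
      using comb[OF k i2 assms(6) e fin(2) _ h h0] assms(7,8) off_def by simp
  qed
qed

end
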